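(* Let $\mathcal{H}$ be a separable Hilbert space and $W$ a self-adjoint operator on $\mathcal{H}$ with $\ker(W)=\{0\}$, and let $(\mathcal{H}_W,[\cdot,\cdot])$ be the associated Krein space. (i) If $W$ is bounded and $0\in\mathrm{spec}(W)$, then no frame $\{f_n\}_{n\in\mathbb{N}}$ for the Hilbert space $(\mathcal{H},\langle\cdot,\cdot\rangle)$ is a frame for the Krein space $(\mathcal{H}_W,[\cdot,\cdot])$. (ii) If $W$ is unbounded, then no frame $\{f_n\}_{n\in\mathbb{N}}\subset\mathrm{dom}(W)$ for the Hilbert space $(\mathcal{H},\langle\cdot,\cdot\rangle)$ is a frame for the Krein space $(\mathcal{H}_W,[\cdot,\cdot])$.
   Context: Let $W$ (possibly unbounded) be self-adjoint with domain $\mathrm{dom}(W)\subset\mathcal{H}$, $\ker W=\{0\}$, polar decomposition $W=J|W|$ ($J$ self-adjoint unitary, $J=E(0,\infty)-E(-\infty,0)$ for the spectral measure $E$ of $W$). On $\mathrm{dom}(W)$ define $[f,g]:=\langle f,Wg\rangle$ and $[f,g]_J:=\langle f,|W|g\rangle$, $\|f\|_J:=\sqrt{[f,g]_J}|_{g=f}$. $\mathcal{H}_W$ is the completion of $\mathrm{dom}(W)$ with respect to $\|\cdot\|_J$, with $[\cdot,\cdot]$, $[\cdot,\cdot]_J$ and $J$ extended by continuity; it is a Krein space with fundamental symmetry $J$ and associated Hilbert inner product $[\cdot,\cdot]_J$. A sequence $\{k_n\}\subset\mathcal{H}_W$ is a frame for the Krein space $\mathcal{H}_W$ if there are $0<A\le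 B<\infty$ with $A\|k\|_J^2\le\sum_n|[k_n,k]|^2\le B\|k\|_J^2$ for all $k\in\mathcal{H}_W$. A frame for the Hilbert space $\mathcal{H}$ is a sequence $\{f_n\}$ with $A\|f\|^2\le\sum_n|\langle f_n,f\rangle|^2\le B\|f\|^2$ for all $f\in\mathcal{H}$, some $0<A\le B<\infty$. (For bounded $W$, $\mathrm{dom}(W)=\mathcal{H}\subset\mathcal{H}_W$.) *)

theory Defs
  imports "HOL-Analysis.Analysis"
begin

text \<open>Inner product is conjugate-linear in the first and linear in the second argument.\<close>

class complex_inner_space = real_normed_vector +
  fixes scaleC :: "complex \<Rightarrow> 'a \<Rightarrow> 'a"
    and cinner :: "'a \<Rightarrow> 'a \<Rightarrow> complex"
  assumes scaleC_of_real: "scaleC (complex_of_real r) x = scaleR r x"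
    and scaleC_add_right: "scaleC a (x + y) = scaleC a x + scaleC a y"
    and scaleC_add_left: "scaleC (a + b) x = scaleC a x + scaleC b x"
    and scaleC_scaleC: "scaleC a (scaleC b x) = scaleC (a * b) x"
    and scaleC_one: "scaleC 1 x = x"
    and cinner_commute: "cinner x y = cnj (cinner y x)"
    and cinner_add_right: "cinner x (y + z) = cinner x y + cinner x z"
    and cinner_scaleC_right: "cinner x (scaleC a y) = a * cinner x y"
    and norm_eq_sqrt_cinner: "norm x = sqrt (Re (cinner x x))"

definition csubspace :: "'a::complex_inner_space set \<Rightarrow> bool" where
  "csubspace D \<longleftrightarrow> 0 \<in> D \<and> (\<forall>x\<in>D. \<forall>y\<in>D. x + y \<in> D) \<and> (\<forall>a. \<forall>x\<in>D. scaleC a x \<in> D)"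

text \<open>Linear operator with domain D (values of W outside D are irrelevant).\<close>
definition linear_on :: "'a::complex_inner_space set \<Rightarrow> ('a \<Rightarrow> 'a) \<Rightarrow> bool" where
  "linear_on D W \<longleftrightarrow> csubspace D \<and>
     (\<forall>x\<in>D. \<forall>y\<in>D. W (x + y) = W x + W y) \<and> (\<forall>a. \<forall>x\<in>D. W (scaleC a x) = scaleC a (W x))"

text \<open>Self-adjoint (possibly unbounded) operator: densely defined, symmetric and W = W^*,
  i.e. dom(W^*) is contained in dom(W) and W^* agrees with W.\<close>
definition self_adjoint_op :: "'a::complex_inner_space set \<Rightarrow> ('a \<Rightarrow> 'a) \<Rightarrow> bool" where
  "self_adjoint_op D W \<longleftrightarrow> linear_on D W \<and> closure D = UNIV \<and>
     (\<forall>f\<in>D. \<forall>g\<in>D. cinner (W f) g = cinner f (W g)) \<and>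
     (\<forall>g h. (\<forall>f\<in>D. cinner (W f) g = cinner f h) \<longrightarrow> g \<in> D \<and> W g = h)"

definition bounded_op :: "'a::complex_inner_space set \<Rightarrow> ('a \<Rightarrow> 'a) \<Rightarrow> bool" where
  "bounded_op D W \<longleftrightarrow> (\<exists>C. \<forall>f\<in>D. norm (W f) \<le> C * norm f)"

definition op_spectrum :: "'a::complex_inner_space set \<Rightarrow> ('a \<Rightarrow> 'a) \<Rightarrow> complex set" where
  "op_spectrum D W = {z. \<not> (\<exists>R. (\<exists>C. \<forall>h. norm (R h) \<le> C * norm h) \<and>
       (\<forall>h. R h \<in> D \<and> W (R h) - scaleC z (R h) = h) \<and>
       (\<forall>f\<in>D. R (W f - scaleC z f) = f))}"

text \<open>J is the fundamental symmetry of the polar decomposition W = J|W|: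
  a bounded self-adjoint unitary (J^2 = I, J = J^*) leaving dom W invariant, commuting
  with W, and such that J W = |W| is nonnegative.  For ker W = 0 this J is unique and
  equals E(0,\<infinity>) - E(-\<infinity>,0).\<close>
definition polar_symmetry :: "'a::complex_inner_space set \<Rightarrow> ('a \<Rightarrow> 'a) \<Rightarrow> ('a \<Rightarrow> 'a) \<Rightarrow> bool" where
  "polar_symmetry D W J \<longleftrightarrow>
     linear_on UNIV J \<and>
     (\<forall>x y. cinner (J x) y = cinner x (J y)) \<and> (\<forall>x. J (J x) = x) \<and>
     (\<forall>f\<in>D. J f \<in> D \<and> J (W f) = W (J f)) \<and>
     (\<forall>f\<in>D. Im (cinner f (J (W f))) = 0 \<and> 0 \<le> Re (cinner f (J (W f))))"

definition hilbert_frame :: "(nat \<Rightarrow> 'a::complex_inner_space) \<Rightarrow> bool" where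
  "hilbert_frame fs \<longleftrightarrow> (\<exists>A B. 0 < A \<and> A \<le> B \<and> (\<forall>f.
      summable (\<lambda>n. (cmod (cinner (fs n) f))\<^sup>2) \<and>
      A * (norm f)\<^sup>2 \<le> (\<Sum>n. (cmod (cinner (fs n) f))\<^sup>2) \<and>
      (\<Sum>n. (cmod (cinner (fs n) f))\<^sup>2) \<le> B * (norm f)\<^sup>2))"

text \<open>Frame for the Krein space H_W, with the frame inequalities tested on the dense
  subspace dom W of H_W (equivalent to testing on all of H_W by continuity).
  Here [k_n,k] = <k_n, W k> and ||k||_J^2 = <k, |W| k> = <k, J W k>.\<close>
definition krein_frame :: "'a::complex_inner_space set \<Rightarrow> ('a \<Rightarrow> 'a) \<Rightarrow> ('a \<Rightarrow> 'a)
    \<Rightarrow> (nat \<Rightarrow> 'a) \<Rightarrow> bool" where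
  "krein_frame D W J ks \<longleftrightarrow> (\<exists>A B. 0 < A \<and> A \<le> B \<and> (\<forall>k\<in>D.
      summable (\<lambda>n. (cmod (cinner (ks n) (W k)))\<^sup>2) \<and>
      A * Re (cinner k (J (W k))) \<le> (\<Sum>n. (cmod (cinner (ks n) (W k)))\<^sup>2) \<and>
      (\<Sum>n. (cmod (cinner (ks n) (W k)))\<^sup>2) \<le> B * Re (cinner k (J (W k)))))"

end

theory Submission
  imports Defs
begin


lemma ci_add_left: "cinner (x + y) z = cinner x z + cinner y (z::'a::complex_inner_space)"
  using cinner_commute[of "x+y" z] cinner_commute[of x z] cinner_commute[of y z] by (simp add: cinner_add_right)

lemma ci_scaleC_left: "cinner (scaleC a x) (y::'a::complex_inner_space) = cnj a * cinner x y"
  using cinner_commute[of "scaleC a x" y] cinner_commute[of x y] by (simp add: cinner_scaleC_right)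

lemma ci_zero_right: "cinner (x::'a::complex_inner_space) 0 = 0"
  using cinner_add_right[of x 0 0] by simp

lemma ci_zero_left: "cinner 0 (x::'a::complex_inner_space) = 0"
  using ci_add_left[of 0 0 x] by simp

lemma ci_minus_right: "cinner (x::'a::complex_inner_space) (- y) = - cinner x y"
  using cinner_add_right[of x y "-y"] by (simp add: ci_zero_right eq_neg_iff_add_eq_0 add.commute)

lemma ci_minus_left: "cinner (- x) (y::'a::complex_inner_space) = - cinner x y"
  using ci_add_left[of x "-x" y] by (simp add: ci_zero_left eq_neg_iff_add_eq_0 add.commute)

lemma ci_diff_right: "cinner (x::'a::complex_inner_space) (y - z) = cinner x y - cinner x z"
  by (simp only: diff_conv_add_uminus cinner_add_right ci_minus_right)

lemma ci_diff_left: "cinner (x - y) (z::'a::complex_inner_space) = cinner x z - cinner y z"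
  by (simp only: diff_conv_add_uminus ci_add_left ci_minus_left)

lemma ci_self_Re: "Re (cinner x (x::'a::complex_inner_space)) = (norm x)\<^sup>2"
proof -
  have "0 \<le> sqrt (Re (cinner x x))" using norm_eq_sqrt_cinner[of x] by (metis norm_ge_zero)
  then have "0 \<le> Re (cinner x x)" using real_sqrt_ge_0_iff by blast
  then show ?thesis using norm_eq_sqrt_cinner[of x] by simp
qed

lemma ci_self_Im: "Im (cinner x (x::'a::complex_inner_space)) = 0"
proof -
  have "Im (cinner x x) = Im (cnj (cinner x x))" using cinner_commute[of x x] by simp
  then show ?thesis by simp
qed

lemma ci_self: "cinner x (x::'a::complex_inner_space) = complex_of_real ((norm x)\<^sup>2)"
  proof (rule complex_eqI)
  show "Re (cinner x x) = Re (complex_of_real ((norm x)\<^sup>2))" using ci_self_Re[of x] by simp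
  show "Im (cinner x x) = Im (complex_of_real ((norm x)\<^sup>2))" using ci_self_Im[of x] by simp
qed

lemma ci_scaleR_right: "cinner (x::'a::complex_inner_space) (scaleR r y) = complex_of_real r * cinner x y"
  by (simp add: cinner_scaleC_right flip: scaleC_of_real)

lemma ci_scaleR_left: "cinner (scaleR r x) (y::'a::complex_inner_space) = complex_of_real r * cinner x y"
  by (simp add: ci_scaleC_left flip: scaleC_of_real)

lemma ci_Re_commute: "Re (cinner x (y::'a::complex_inner_space)) = Re (cinner y x)"
  using cinner_commute[of x y] by simp

lemma norm_add_sq: "(norm (x + y))\<^sup>2 = (norm x)\<^sup>2 + (norm y)\<^sup>2 + 2 * Re (cinner x (y::'a::complex_inner_space))"
proof -
  have "(norm (x + y))\<^sup>2 = Re (cinner (x+y) (x+y))" by (simp add: ci_self_Re)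
  also have "\<dots> = Re (cinner x x) + Re (cinner y y) + Re (cinner x y) + Re (cinner y x)"
    by (simp add: cinner_add_right ci_add_left)
  finally show ?thesis by (simp add: ci_self_Re ci_Re_commute[of y x])
qed

lemma norm_diff_sq: "(norm (x - y))\<^sup>2 = (norm x)\<^sup>2 + (norm y)\<^sup>2 - 2 * Re (cinner x (y::'a::complex_inner_space))"
  using norm_add_sq[of x "-y"] by (simp add: ci_minus_right)

lemma form_CS:
  fixes B :: "'a::complex_inner_space \<Rightarrow> 'a \<Rightarrow> complex"
  assumes add: "\<And>x y z. B x (y + z) = B x y + B x z"
    and sc: "\<And>x s y. B x (scaleC s y) = s * B x y"
    and herm: "\<And>x y. B x y = cnj (B y x)"
    and pos: "\<And>x. 0 \<le> Re (B x x)"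
  shows "(cmod (B x y))\<^sup>2 \<le> Re (B x x) * Re (B y y)"
proof -
  have addl: "B (u + v) z = B u z + B v z" for u v z
  proof -
    have "B (u+v) z = cnj (B z (u+v))" by (rule herm)
    also have "\<dots> = cnj (B z u) + cnj (B z v)" by (simp add: add)
    also have "\<dots> = B u z + B v z" by (simp add: herm[of u z] herm[of v z])
    finally show ?thesis .
  qed
  have scl: "B (scaleC s u) z = cnj s * B u z" for s u z
  proof -
    have "B (scaleC s u) z = cnj (B z (scaleC s u))" by (rule herm)
    also have "\<dots> = cnj s * cnj (B z u)" by (simp add: sc)
    also have "\<dots> = cnj s * B u z" by (simp add: herm[of u z])
    finally show ?thesis .
  qed
  define c where "c = B x y"
  define \<beta> where "\<beta> = (cmod c)\<^sup>2"
  define \<alpha> where "\<alpha> = Re (B x x)"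
  define \<gamma> where "\<gamma> = Re (B y y)"
  have cc: "c * cnj c = complex_of_real \<beta>" unfolding \<beta>_def by (simp add: complex_norm_square[symmetric])
  have Byx: "B y x = cnj c" unfolding c_def by (rule herm)
  have key: "0 \<le> \<alpha> - 2 * t * \<beta> + t\<^sup>2 * \<beta> * \<gamma>" for t :: real
  proof -
    define s where "s = - (complex_of_real t * cnj c)"
    have "B (x + scaleC s y) (x + scaleC s y) = B x x + s * c + cnj s * cnj c + cnj s * s * B y y"
      by (simp add: add addl sc scl c_def Byx algebra_simps)
    also have "s * c = - complex_of_real (t * \<beta>)" unfolding s_def using cc
      by (simp add: algebra_simps)
    also have "cnj s * cnj c = - complex_of_real (t * \<beta>)" unfolding s_def using cc
      by (simp add: algebra_simps)
    also have "cnj s * s = complex_of_real (t\<^sup>2 * \<beta>)" unfolding s_def using cc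
      by (simp add: algebra_simps power2_eq_square)
    finally have "Re (B (x + scaleC s y) (x + scaleC s y)) = \<alpha> - 2 * t * \<beta> + t\<^sup>2 * \<beta> * \<gamma>"
      by (simp add: \<alpha>_def \<gamma>_def)
    then show ?thesis using pos by metis
  qed
  have b0: "0 \<le> \<beta>" "0 \<le> \<gamma>" "0 \<le> \<alpha>" using pos by (auto simp: \<beta>_def \<gamma>_def \<alpha>_def)
  have "\<beta> \<le> \<alpha> * \<gamma>"
  proof (cases "\<beta> = 0")
    case True then show ?thesis using b0 by simp
  next
    case False
    then have bp: "\<beta> > 0" using b0 by simp
    show ?thesis
    proof (cases "\<gamma> = 0")
      case True
      have "0 \<le> \<alpha> - 2 * ((\<alpha> + 1) / \<beta>) * \<beta>" using key[of "(\<alpha>+1)/\<beta>"] True by simp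
      then have False using bp b0 by simp
      then show ?thesis ..
    next
      case False
      then have gp: "\<gamma> > 0" using b0 by simp
      have "0 \<le> \<alpha> - 2 * (1/\<gamma>) * \<beta> + (1/\<gamma>)\<^sup>2 * \<beta> * \<gamma>" by (rule key)
      also have "\<dots> = \<alpha> - \<beta> / \<gamma>" using gp by (simp add: power2_eq_square field_simps)
      finally show ?thesis using gp by (simp add: field_simps)
    qed
  qed
  then show ?thesis by (simp add: \<beta>_def \<alpha>_def \<gamma>_def c_def)
qed

lemma CS: "cmod (cinner x y) \<le> norm x * norm (y::'a::complex_inner_space)"
proof -
  have "(cmod (cinner x y))\<^sup>2 \<le> Re (cinner x x) * Re (cinner y y)"
    by (rule form_CS) (auto simp: cinner_add_right cinner_scaleC_right intro: cinner_commute simp: ci_self_Re)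
  also have "\<dots> = (norm x * norm y)\<^sup>2" by (simp add: ci_self_Re power_mult_distrib)
  finally show ?thesis by (rule power2_le_imp_le) simp
qed



lemma norm_scaleC: "norm (scaleC s (x::'a::complex_inner_space)) = cmod s * norm x"
proof -
  have "(norm (scaleC s x))\<^sup>2 = Re (cinner (scaleC s x) (scaleC s x))" by (simp add: ci_self_Re)
  also have "\<dots> = Re (cnj s * s * cinner x x)" by (simp only: ci_scaleC_left cinner_scaleC_right mult.assoc mult.left_commute[of s "cnj s"])
  also have "cnj s * s = complex_of_real ((cmod s)\<^sup>2)" using complex_norm_square[of s] by (simp add: mult.commute)
  also have "Re (complex_of_real ((cmod s)\<^sup>2) * cinner x x) = (cmod s * norm x)\<^sup>2"
    by (simp add: ci_self power_mult_distrib)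
  finally show ?thesis by (simp add: power2_eq_iff_nonneg)
qed

lemma scaleC_zero: "scaleC 0 (x::'a::complex_inner_space) = 0"
  using scaleC_of_real[of 0 x] by simp

lemma cmod_ci_self: "cmod (cinner x (x::'a::complex_inner_space)) = (norm x)\<^sup>2"
  by (simp only: ci_self norm_of_real) simp

lemma ci_cont_right:
  assumes "z \<longlonglongrightarrow> l"
  shows "(\<lambda>n. cinner a (z n)) \<longlonglongrightarrow> cinner a (l::'a::complex_inner_space)"
proof -
  have "(\<lambda>n. cinner a (z n) - cinner a l) \<longlonglongrightarrow> 0"
  proof (rule Lim_null_comparison)
    show "\<forall>\<^sub>F n in sequentially. norm (cinner a (z n) - cinner a l) \<le> norm a * norm (z n - l)"
      by (simp add: CS flip: ci_diff_right)
    have "(\<lambda>n. z n - l) \<longlonglongrightarrow> 0" using assms by (simp add: LIM_zero_iff)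
    then have "(\<lambda>n. norm (z n - l)) \<longlonglongrightarrow> 0" by (simp add: tendsto_norm_zero)
    then show "(\<lambda>n. norm a * norm (z n - l)) \<longlonglongrightarrow> 0" by (simp add: tendsto_mult_right_zero)
  qed
  then show ?thesis by (simp add: LIM_zero_iff)
qed



locale posop =
  fixes T :: "'a::{complex_inner_space,complete_space} \<Rightarrow> 'a" and b C :: real
  assumes add: "\<And>x y. T (x + y) = T x + T y"
    and sc: "\<And>s x. T (scaleC s x) = scaleC s (T x)"
    and sym: "\<And>x y. cinner x (T y) = cinner (T x) y"
    and pos: "\<And>x. 0 \<le> Re (cinner x (T x))"
    and inj: "\<And>x. T x = 0 \<Longrightarrow> x = 0"
    and bnd: "\<And>x. norm (T x) \<le> C * norm x"
    and gap: "\<And>x. Re (cinner x (T x)) \<le> b * (norm (T x))\<^sup>2"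
    and bpos: "0 < b"
begin

lemma T0: "T 0 = 0"
  using add[of 0 0] by simp

lemma Tminus: "T (- x) = - T x"
  using add[of x "-x"] T0 by (simp add: eq_neg_iff_add_eq_0 add.commute)

lemma Tdiff: "T (x - y) = T x - T y"
  by (simp only: diff_conv_add_uminus add Tminus)

lemma TscaleR: "T (scaleR r x) = scaleR r (T x)"
  by (metis sc scaleC_of_real)

lemma PCS: "(cmod (cinner x (T y)))\<^sup>2 \<le> Re (cinner x (T x)) * Re (cinner y (T y))"
proof (rule form_CS[where B = "\<lambda>x y. cinner x (T y)"])
  show "cinner x (T (y + z)) = cinner x (T y) + cinner x (T z)" for x y z
    by (simp add: add cinner_add_right)
  show "cinner x (T (scaleC s y)) = s * cinner x (T y)" for x s y
    by (simp add: sc cinner_scaleC_right)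
  show "cinner x (T y) = cnj (cinner y (T x))" for x y
    using cinner_commute[of x "T y"] sym[of y x] by simp
  show "0 \<le> Re (cinner x (T x))" for x by (rule pos)
qed

lemma Tcont:
  assumes "z \<longlonglongrightarrow> l"
  shows "(\<lambda>n. T (z n)) \<longlonglongrightarrow> T l"
proof -
  have "(\<lambda>n. T (z n) - T l) \<longlonglongrightarrow> 0"
  proof (rule Lim_null_comparison)
    show "\<forall>\<^sub>F n in sequentially. norm (T (z n) - T l) \<le> C * norm (z n - l)"
      using bnd by (simp flip: Tdiff)
    have "(\<lambda>n. z n - l) \<longlonglongrightarrow> 0" using assms by (simp add: LIM_zero_iff)
    then have "(\<lambda>n. norm (z n - l)) \<longlonglongrightarrow> 0" by (simp add: tendsto_norm_zero)
    then show "(\<lambda>n. C * norm (z n - l)) \<longlonglongrightarrow> 0" by (simp add: tendsto_mult_right_zero)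
  qed
  then show ?thesis by (simp add: LIM_zero_iff)
qed

lemma gap_range: "norm (T z) \<le> b * norm (T (T z))"
proof (cases "T z = 0")
  case True then show ?thesis using bpos by simp
next
  case False
  let ?u = "T z"
  have n: "norm ?u > 0" using False by simp
  have "(norm ?u)\<^sup>2 * (norm ?u)\<^sup>2 = (cmod (cinner ?u (T z)))\<^sup>2"
    by (simp add: cmod_ci_self power2_eq_square)
  also have "\<dots> \<le> Re (cinner ?u (T ?u)) * Re (cinner z (T z))" by (rule PCS)
  also have "\<dots> \<le> Re (cinner ?u (T ?u)) * (b * (norm ?u)\<^sup>2)"
    by (rule mult_left_mono[OF gap pos])
  finally have "(norm ?u)\<^sup>2 * (norm ?u)\<^sup>2 \<le> (norm ?u)\<^sup>2 * (b * Re (cinner ?u (T ?u)))"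
    by (simp add: algebra_simps)
  moreover have np: "0 < (norm ?u)\<^sup>2" using n by simp
  ultimately have "(norm ?u)\<^sup>2 \<le> b * Re (cinner ?u (T ?u))"
    by (rule mult_left_le_imp_le)
  also have "Re (cinner ?u (T ?u)) \<le> norm ?u * norm (T ?u)"
    using CS[of ?u "T ?u"] complex_Re_le_cmod order_trans by blast
  finally have "norm ?u * norm ?u \<le> norm ?u * (b * norm (T ?u))"
    using bpos by (simp add: power2_eq_square mult_left_mono algebra_simps)
  then show ?thesis using n by simp
qed


lemma dense_range: "\<exists>z. (\<lambda>n. T (z n)) \<longlonglongrightarrow> x"
proof -
  define S where "S = range (\<lambda>w. (norm (x - T w))\<^sup>2)"
  define d where "d = Inf S"
  have Sne: "S \<noteq> {}" and Sbd: "bdd_below S" unfolding S_def by (auto intro: bdd_belowI[of _ 0])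
  have low: "d \<le> (norm (x - T w))\<^sup>2" for w
    unfolding d_def by (rule cInf_lower[OF _ Sbd]) (simp add: S_def)
  have "\<forall>n. \<exists>w. (norm (x - T w))\<^sup>2 < d + 1 / real (Suc n)"
  proof
    fix n
    have "Inf S < d + 1 / real (Suc n)" unfolding d_def by simp
    then obtain y where "y \<in> S" "y < d + 1 / real (Suc n)" using cInf_less_iff[OF Sne Sbd] by blast
    then show "\<exists>w. (norm (x - T w))\<^sup>2 < d + 1 / real (Suc n)" unfolding S_def by auto
  qed
  then obtain z where z: "\<And>n. (norm (x - T (z n)))\<^sup>2 < d + 1 / real (Suc n)" by metis
  have cau_est: "(norm (T (z m) - T (z n)))\<^sup>2 \<le> 2 / real (Suc m) + 2 / real (Suc n)" for m n
  proof -
    define p where "p = x - T (z m)"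
    define q where "q = x - T (z n)"
    have pq: "p + q = scaleR 2 (x - T (scaleR (1/2) (z m + z n)))"
      unfolding p_def q_def by (simp add: TscaleR add algebra_simps scaleR_right_diff_distrib scaleR_2)
    have "(norm (p + q))\<^sup>2 = 4 * (norm (x - T (scaleR (1/2) (z m + z n))))\<^sup>2"
      unfolding pq by (simp add: power_mult_distrib)
    then have pq4: "4 * d \<le> (norm (p + q))\<^sup>2" using low by simp
    have par: "(norm (p + q))\<^sup>2 + (norm (p - q))\<^sup>2 = 2 * (norm p)\<^sup>2 + 2 * (norm q)\<^sup>2"
      by (simp add: norm_add_sq norm_diff_sq)
    have "p - q = T (z n) - T (z m)" unfolding p_def q_def by simp
    then have "norm (T (z m) - T (z n)) = norm (p - q)" by (simp add: norm_minus_commute)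
    then show ?thesis using par pq4 z[of m] z[of n] unfolding p_def q_def by simp
  qed
  have "Cauchy (\<lambda>n. T (z n))"
    unfolding Cauchy_def
  proof (intro allI impI)
    fix e :: real assume e: "0 < e"
    obtain M :: nat where M: "4 / e\<^sup>2 < real M" using reals_Archimedean2 by blast
    have "\<forall>m\<ge>M. \<forall>n\<ge>M. dist (T (z m)) (T (z n)) < e"
    proof (intro allI impI)
      fix m n assume mn: "M \<le> m" "M \<le> n"
      have e2: "0 < e\<^sup>2" using e by simp
      have "4 / e\<^sup>2 < real (Suc m)" "4 / e\<^sup>2 < real (Suc n)" using M mn by auto
      then have "4 < e\<^sup>2 * real (Suc m)" "4 < e\<^sup>2 * real (Suc n)" using e2
        by (simp_all add: divide_less_eq mult.commute)
      then have "2 / real (Suc m) < e\<^sup>2 / 2" "2 / real (Suc n) < e\<^sup>2 / 2"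
        by (simp_all add: divide_less_eq field_simps)
      then have "(norm (T (z m) - T (z n)))\<^sup>2 < e\<^sup>2" using cau_est[of m n] by simp
      then have "norm (T (z m) - T (z n)) < e" using e by (simp add: power_less_imp_less_base)
      then show "dist (T (z m)) (T (z n)) < e" by (simp add: dist_norm)
    qed
    then show "\<exists>M. \<forall>m\<ge>M. \<forall>n\<ge>M. dist (T (z m)) (T (z n)) < e" by blast
  qed
  then obtain v where v: "(\<lambda>n. T (z n)) \<longlonglongrightarrow> v" using Cauchy_convergent_iff convergent_def by blast
  define e where "e = x - v"
  have lim_sq: "(\<lambda>n. (norm (x - T (z n) - c))\<^sup>2) \<longlonglongrightarrow> (norm (e - c))\<^sup>2" for c
    unfolding e_def by (intro tendsto_intros v)
  have inv: "(\<lambda>n. 1 / real (Suc n)) \<longlonglongrightarrow> 0"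
    using LIMSEQ_Suc[OF lim_inverse_n'] by simp
  have e_le: "(norm e)\<^sup>2 \<le> d"
  proof (rule tendsto_le[OF trivial_limit_sequentially])
    show "(\<lambda>n. d + 1 / real (Suc n)) \<longlonglongrightarrow> d" using tendsto_add[OF tendsto_const inv] by simp
    show "(\<lambda>n. (norm (x - T (z n) - 0))\<^sup>2) \<longlonglongrightarrow> (norm e)\<^sup>2" using lim_sq[of 0] by simp
    show "\<forall>\<^sub>F n in sequentially. (norm (x - T (z n) - 0))\<^sup>2 \<le> d + 1 / real (Suc n)"
      using z by (simp add: less_imp_le)
  qed
  have var: "(norm e)\<^sup>2 \<le> (norm (e - scaleR t (T e)))\<^sup>2" for t
  proof -
    have "d \<le> (norm (e - scaleR t (T e)))\<^sup>2"
    proof (rule tendsto_le[OF trivial_limit_sequentially lim_sq tendsto_const])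
      show "\<forall>\<^sub>F n in sequentially. d \<le> (norm (x - T (z n) - scaleR t (T e)))\<^sup>2"
        using low[of "z n + scaleR t e" for n] by (simp add: add TscaleR algebra_simps)
    qed
    then show ?thesis using e_le by linarith
  qed
  have r0: "Re (cinner e (T e)) \<le> 0"
  proof (rule ccontr)
    assume "\<not> ?thesis"
    then have r: "Re (cinner e (T e)) > 0" by simp
    define K where "K = (norm (T e))\<^sup>2"
    have K0: "0 \<le> K" unfolding K_def by simp
    define t where "t = Re (cinner e (T e)) / (K + 1)"
    have t0: "0 < t" unfolding t_def using r K0 by simp
    have "(norm e)\<^sup>2 \<le> (norm e)\<^sup>2 + t\<^sup>2 * K - 2 * t * Re (cinner e (T e))"
      using var[of t] by (simp add: norm_diff_sq ci_scaleR_right K_def power_mult_distrib)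
    then have "2 * t * Re (cinner e (T e)) \<le> t * (t * K)" by (simp add: power2_eq_square algebra_simps)
    then have "2 * Re (cinner e (T e)) \<le> t * K" using t0 by simp
    also have "t * K < Re (cinner e (T e))"
      unfolding t_def using r K0 by (simp add: field_simps)
    finally show False using r by simp
  qed
  have "((norm (T e))\<^sup>2)\<^sup>2 = (cmod (cinner (T e) (T e)))\<^sup>2" by (simp add: cmod_ci_self)
  also have "\<dots> \<le> Re (cinner (T e) (T (T e))) * Re (cinner e (T e))" by (rule PCS)
  also have "\<dots> \<le> 0" using r0 pos[of "T e"] by (simp add: mult_nonneg_nonpos)
  finally have "T e = 0" by simp
  then have "e = 0" by (rule inj)
  then have "v = x" unfolding e_def by simp
  then show ?thesis using v by blast
qed


lemma below: "norm x \<le> b * norm (T x)"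
proof -
  obtain z where z: "(\<lambda>n. T (z n)) \<longlonglongrightarrow> x" using dense_range by blast
  have Tz: "(\<lambda>n. T (T (z n))) \<longlonglongrightarrow> T x" by (rule Tcont[OF z])
  show ?thesis
  proof (rule tendsto_le[OF trivial_limit_sequentially])
    show "(\<lambda>n. b * norm (T (T (z n)))) \<longlonglongrightarrow> b * norm (T x)" by (intro tendsto_intros Tz)
    show "(\<lambda>n. norm (T (z n))) \<longlonglongrightarrow> norm x" by (intro tendsto_intros z)
    show "\<forall>\<^sub>F n in sequentially. norm (T (z n)) \<le> b * norm (T (T (z n)))"
      by (simp add: gap_range)
  qed
qed

lemma surj: "\<exists>y. T y = h"
proof -
  obtain z where z: "(\<lambda>n. T (z n)) \<longlonglongrightarrow> h" using dense_range by blast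
  then have cT: "Cauchy (\<lambda>n. T (z n))" by (rule LIMSEQ_imp_Cauchy)
  have "Cauchy z"
    unfolding Cauchy_def
  proof (intro allI impI)
    fix e :: real assume e: "0 < e"
    then have "0 < e / b" using bpos by simp
    then obtain M where M: "\<forall>m\<ge>M. \<forall>n\<ge>M. dist (T (z m)) (T (z n)) < e / b"
      using cT unfolding Cauchy_def by blast
    have "\<forall>m\<ge>M. \<forall>n\<ge>M. dist (z m) (z n) < e"
    proof (intro allI impI)
      fix m n assume "M \<le> m" "M \<le> n"
      then have "norm (T (z m) - T (z n)) < e / b" using M by (simp add: dist_norm)
      then have "b * norm (T (z m - z n)) < e" using bpos by (simp add: Tdiff field_simps)
      moreover have "norm (z m - z n) \<le> b * norm (T (z m - z n))" by (rule below)
      ultimately show "dist (z m) (z n) < e" by (simp add: dist_norm)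
    qed
    then show "\<exists>M. \<forall>m\<ge>M. \<forall>n\<ge>M. dist (z m) (z n) < e" by blast
  qed
  then obtain y where y: "z \<longlonglongrightarrow> y" using Cauchy_convergent_iff convergent_def by blast
  have "(\<lambda>n. T (z n)) \<longlonglongrightarrow> T y" by (rule Tcont[OF y])
  then have "T y = h" using z LIMSEQ_unique by blast
  then show ?thesis by blast
qed

end


lemma scaleC_m1: "scaleC (-1) (x::'a::complex_inner_space) = - x"
  using scaleC_of_real[of "-1" x] by simp

lemma J_norm:
  assumes "\<And>x y. cinner (J x) y = cinner x (J y)" "\<And>x. J (J x) = x"
  shows "norm (J x) = norm (x::'a::complex_inner_space)"
proof -
  have "(norm (J x))\<^sup>2 = (norm x)\<^sup>2"
    by (simp only: ci_self_Re[symmetric] assms)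
  then show ?thesis by (simp add: power2_eq_iff_nonneg)
qed

lemma bounded_frames:
  fixes D :: "'a::complex_inner_space set" and W J :: "'a \<Rightarrow> 'a"
  assumes Jsym: "\<And>x y. cinner (J x) y = cinner x (J y)" and JJ: "\<And>x. J (J x) = x"
    and F1: "\<And>k. k \<in> D \<Longrightarrow> A * (norm (W k))\<^sup>2 \<le> B * Re (cinner k (J (W k)))"
    and A: "0 < A" and B: "0 < B"
  shows "bounded_op D W"
proof -
  have "norm (W k) \<le> (B / A) * norm k" if k: "k \<in> D" for k
  proof (cases "W k = 0")
    case True
    then show ?thesis using A B by simp
  next
    case False
    have "A * (norm (W k))\<^sup>2 \<le> B * Re (cinner k (J (W k)))" by (rule F1[OF k])
    also have "\<dots> \<le> B * (norm k * norm (W k))"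
    proof -
      have "Re (cinner k (J (W k))) \<le> norm k * norm (J (W k))"
        using CS[of k "J (W k)"] complex_Re_le_cmod order_trans by blast
      then show ?thesis using B J_norm[OF Jsym JJ] by (simp add: mult_left_mono)
    qed
    finally have "norm (W k) * (A * norm (W k)) \<le> norm (W k) * (B * norm k)"
      by (simp add: power2_eq_square algebra_simps)
    then have "A * norm (W k) \<le> B * norm k" using False by (simp add: mult_le_cancel_left_pos)
    then show ?thesis using A by (simp add: field_simps)
  qed
  then show ?thesis unfolding bounded_op_def by blast
qed


lemma lin_diff:
  assumes "linear_on D W" "x \<in> D" "y \<in> D"
  shows "x - y \<in> D \<and> W (x - y) = W x - W y"
proof -
  have "x - y = x + scaleC (-1) y" by (simp add: scaleC_m1)
  moreover have "scaleC (-1) y \<in> D" "x + scaleC (-1) y \<in> D"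
    using assms unfolding linear_on_def csubspace_def by blast+
  moreover have "W (x + scaleC (-1) y) = W x + scaleC (-1) (W y)"
    using assms unfolding linear_on_def csubspace_def by metis
  ultimately show ?thesis by (simp add: scaleC_m1)
qed

lemma D_univ:
  fixes D :: "'a::{complex_inner_space,complete_space} set" and W :: "'a \<Rightarrow> 'a"
  assumes sa: "self_adjoint_op D W" and bd: "bounded_op D W"
  shows "D = UNIV"
proof -
  have lin: "linear_on D W" and cl: "closure D = UNIV"
    and sym: "\<And>f g. f \<in> D \<Longrightarrow> g \<in> D \<Longrightarrow> cinner (W f) g = cinner f (W g)"
    and adj: "\<And>g h. (\<forall>f\<in>D. cinner (W f) g = cinner f h) \<Longrightarrow> g \<in> D \<and> W g = h"
    using sa unfolding self_adjoint_op_def by blast+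
  obtain C0 where C0: "\<And>f. f \<in> D \<Longrightarrow> norm (W f) \<le> C0 * norm f" using bd unfolding bounded_op_def by blast
  define C where "C = max C0 1"
  have C: "\<And>f. f \<in> D \<Longrightarrow> norm (W f) \<le> C * norm f"
    using C0 unfolding C_def by (meson max.cobounded1 mult_right_mono norm_ge_zero order_trans)
  have Cp: "0 < C" unfolding C_def by simp
  have "g \<in> D" for g
  proof -
    have "g \<in> closure D" using cl by simp
    then obtain f where fD: "\<And>n. f n \<in> D" and fg: "f \<longlonglongrightarrow> g"
      using closure_sequential by blast
    have cf: "Cauchy f" using fg by (rule LIMSEQ_imp_Cauchy)
    have "Cauchy (\<lambda>n. W (f n))"
      unfolding Cauchy_def
    proof (intro allI impI)
      fix e :: real assume e: "0 < e"
      then have "0 < e / C" using Cp by simp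
      then obtain M where M: "\<forall>m\<ge>M. \<forall>n\<ge>M. dist (f m) (f n) < e / C"
        using cf unfolding Cauchy_def by blast
      have "\<forall>m\<ge>M. \<forall>n\<ge>M. dist (W (f m)) (W (f n)) < e"
      proof (intro allI impI)
        fix m n assume "M \<le> m" "M \<le> n"
        then have "norm (f m - f n) < e / C" using M by (simp add: dist_norm)
        then have "C * norm (f m - f n) < e" using Cp by (simp add: field_simps)
        moreover have "norm (W (f m) - W (f n)) \<le> C * norm (f m - f n)"
          using lin_diff[OF lin fD fD, of m n] C by metis
        ultimately show "dist (W (f m)) (W (f n)) < e" by (simp add: dist_norm)
      qed
      then show "\<exists>M. \<forall>m\<ge>M. \<forall>n\<ge>M. dist (W (f m)) (W (f n)) < e" by blast
    qed
    then obtain h where h: "(\<lambda>n. W (f n)) \<longlonglongrightarrow> h" using Cauchy_convergent_iff convergent_def by blast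
    have "\<forall>u\<in>D. cinner (W u) g = cinner u h"
    proof
      fix u assume u: "u \<in> D"
      have l1: "(\<lambda>n. cinner (W u) (f n)) \<longlonglongrightarrow> cinner (W u) g" by (rule ci_cont_right[OF fg])
      have l2: "(\<lambda>n. cinner u (W (f n))) \<longlonglongrightarrow> cinner u h" by (rule ci_cont_right[OF h])
      have "(\<lambda>n. cinner (W u) (f n)) = (\<lambda>n. cinner u (W (f n)))" using sym[OF u fD] by simp
      then show "cinner (W u) g = cinner u h" using l1 l2 LIMSEQ_unique by metis
    qed
    then show ?thesis using adj by blast
  qed
  then show ?thesis by blast
qed


theorem proposition4p1:
  fixes D :: "'a::{complex_inner_space, complete_space} set"
    and W J :: "'a \<Rightarrow> 'a"
  assumes "separable_space (euclidean :: 'a topology)"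
    and "self_adjoint_op D W"
    and "\<forall>f\<in>D. W f = 0 \<longrightarrow> f = 0"
    and "polar_symmetry D W J"
  shows "(bounded_op D W \<and> 0 \<in> op_spectrum D W \<longrightarrow>
            (\<forall>fs. hilbert_frame fs \<longrightarrow> \<not> krein_frame D W J fs))
       \<and> (\<not> bounded_op D W \<longrightarrow>
            (\<forall>fs. range fs \<subseteq> D \<and> hilbert_frame fs \<longrightarrow> \<not> krein_frame D W J fs))"
proof -
  note sa = assms(2)
  have inj0: "\<And>f. f \<in> D \<Longrightarrow> W f = 0 \<Longrightarrow> f = 0" using assms(3) by blast
  have Jlin: "linear_on UNIV J" and Jsym: "\<And>x y. cinner (J x) y = cinner x (J y)"
    and JJ: "\<And>x. J (J x) = x"
    and Jcomm: "\<And>f. f \<in> D \<Longrightarrow> J f \<in> D \<and> J (W f) = W (J f)"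
    and Jpos: "\<And>f. f \<in> D \<Longrightarrow> 0 \<le> Re (cinner f (J (W f)))"
    using assms(4) unfolding polar_symmetry_def by blast+
  have Jadd: "J (x + y) = J x + J y" and Jsc: "J (scaleC s x) = scaleC s (J x)" for x y s
    using Jlin unfolding linear_on_def by blast+
  have J0: "J 0 = 0" using Jadd[of 0 0] by simp
  have lin: "linear_on D W"
    and Wsym: "\<And>f g. f \<in> D \<Longrightarrow> g \<in> D \<Longrightarrow> cinner (W f) g = cinner f (W g)"
    using sa unfolding self_adjoint_op_def by blast+
  have frames: "\<exists>A1 B1 A2 B2. 0 < A1 \<and> 0 < B1 \<and> 0 < A2 \<and> 0 < B2 \<and>
      (\<forall>k\<in>D. A1 * (norm (W k))\<^sup>2 \<le> B1 * Re (cinner k (J (W k)))) \<and>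
      (\<forall>k\<in>D. A2 * Re (cinner k (J (W k))) \<le> B2 * (norm (W k))\<^sup>2)"
    if hf: "hilbert_frame fs" and kf: "krein_frame D W J fs" for fs
  proof -
    obtain AH BH where H: "0 < AH" "AH \<le> BH" "\<And>f. AH * (norm f)\<^sup>2 \<le> (\<Sum>n. (cmod (cinner (fs n) f))\<^sup>2)"
        "\<And>f. (\<Sum>n. (cmod (cinner (fs n) f))\<^sup>2) \<le> BH * (norm f)\<^sup>2"
      using hf unfolding hilbert_frame_def by blast
    obtain AK BK where K: "0 < AK" "AK \<le> BK"
        "\<And>k. k \<in> D \<Longrightarrow> AK * Re (cinner k (J (W k))) \<le> (\<Sum>n. (cmod (cinner (fs n) (W k)))\<^sup>2)"
        "\<And>k. k \<in> D \<Longrightarrow> (\<Sum>n. (cmod (cinner (fs n) (W k)))\<^sup>2) \<le> BK * Re (cinner k (J (W k)))"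
      using kf unfolding krein_frame_def by blast
    have "\<forall>k\<in>D. AH * (norm (W k))\<^sup>2 \<le> BK * Re (cinner k (J (W k)))"
      using H(3) K(4) order_trans by blast
    moreover have "\<forall>k\<in>D. AK * Re (cinner k (J (W k))) \<le> BH * (norm (W k))\<^sup>2"
      using H(4) K(3) order_trans by blast
    moreover have "0 < AH" "0 < BK" "0 < AK" "0 < BH" using H K by linarith+
    ultimately show ?thesis by blast
  qed
  have part2: "\<not> bounded_op D W \<longrightarrow>
            (\<forall>fs. range fs \<subseteq> D \<and> hilbert_frame fs \<longrightarrow> \<not> krein_frame D W J fs)"
  proof (intro impI allI notI)
    fix fs assume nb: "\<not> bounded_op D W" and "range fs \<subseteq> D \<and> hilbert_frame fs"
      and kf: "krein_frame D W J fs"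
    then have hf: "hilbert_frame fs" by blast
    obtain A1 B1 where "0 < A1" "0 < B1" "\<forall>k\<in>D. A1 * (norm (W k))\<^sup>2 \<le> B1 * Re (cinner k (J (W k)))"
      using frames[OF hf kf] by blast
    then have "bounded_op D W" using bounded_frames[OF Jsym JJ] by blast
    then show False using nb by blast
  qed
  have part1: "bounded_op D W \<and> 0 \<in> op_spectrum D W \<longrightarrow>
            (\<forall>fs. hilbert_frame fs \<longrightarrow> \<not> krein_frame D W J fs)"
  proof (intro impI allI notI)
    fix fs assume bs: "bounded_op D W \<and> 0 \<in> op_spectrum D W"
      and hf: "hilbert_frame fs" and kf: "krein_frame D W J fs"
    have DU: "D = UNIV" using D_univ[OF sa] bs by blast
    obtain A2 B2 where A2: "0 < A2" "0 < B2" and F2: "\<And>k. A2 * Re (cinner k (J (W k))) \<le> B2 * (norm (W k))\<^sup>2"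
      using frames[OF hf kf] DU by blast
    obtain C0 where C0: "\<And>f. norm (W f) \<le> C0 * norm f" using bs DU unfolding bounded_op_def by blast
    have Wadd: "W (x + y) = W x + W y" and Wsc: "W (scaleC s x) = scaleC s (W x)" for x y s
      using lin DU unfolding linear_on_def by blast+
    have Wdiff: "W (x - y) = W x - W y" for x y using lin_diff[OF lin] DU by blast
    have Jn: "norm (J x) = norm x" for x by (rule J_norm[OF Jsym JJ])
    interpret P: posop "\<lambda>x. J (W x)" "B2 / A2" C0
    proof
      show "J (W (x + y)) = J (W x) + J (W y)" for x y by (simp add: Wadd Jadd)
      show "J (W (scaleC s x)) = scaleC s (J (W x))" for s x by (simp add: Wsc Jsc)
      show "cinner x (J (W y)) = cinner (J (W x)) y" for x y
      proof -
        have "cinner x (J (W y)) = cinner (J x) (W y)" by (simp add: Jsym)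
        also have "\<dots> = cinner (W (J x)) y" using Wsym DU by simp
        also have "\<dots> = cinner (J (W x)) y" using Jcomm DU by simp
        finally show ?thesis .
      qed
      show "0 \<le> Re (cinner x (J (W x)))" for x using Jpos DU by simp
      show "x = 0" if "J (W x) = 0" for x
      proof -
        have "W x = J (J (W x))" by (simp add: JJ)
        also have "\<dots> = 0" using that J0 by simp
        finally show ?thesis using inj0 DU by simp
      qed
      show "norm (J (W x)) \<le> C0 * norm x" for x using C0 Jn by simp
      show "Re (cinner x (J (W x))) \<le> B2 / A2 * (norm (J (W x)))\<^sup>2" for x
        using F2[of x] A2 Jn by (simp add: field_simps)
      show "0 < B2 / A2" using A2 by simp
    qed
    define R where "R h = (SOME y. J (W y) = J h)" for h
    have WR: "W (R h) = h" for h
    proof -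
      have "J (W (R h)) = J h" unfolding R_def using P.surj by (rule someI_ex)
      then have "J (J (W (R h))) = J (J h)" by simp
      then show ?thesis by (simp add: JJ)
    qed
    have Rb: "norm (R h) \<le> B2 / A2 * norm h" for h
      using P.below[of "R h"] WR Jn by simp
    have RW: "R (W f) = f" for f
    proof -
      have "W (R (W f) - f) = 0" by (simp add: Wdiff WR)
      then have "R (W f) - f = 0" using inj0 DU by blast
      then show ?thesis by simp
    qed
    have "0 \<notin> op_spectrum D W"
      unfolding op_spectrum_def
    proof (simp add: scaleC_zero DU, intro exI conjI)
      show "\<forall>h. norm (R h) \<le> B2 / A2 * norm h" using Rb by blast
      show "\<forall>h. W (R h) = h" using WR by blast
      show "\<forall>f. R (W f) = f" using RW by blast
    qed
    then show False using bs by blast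
  qed
  show ?thesis using part1 part2 by blast
qed


end
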